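(* Let $n\ge 2$ and $0\le r\le n-1$ be integers and let $B_r=X^{(\le r)}\cup\{B\in X^{(r+1)}\cup X^{(r+2)}: \{1,2\}\subseteq B\}\subseteq Q_n$. Then $|B_r|=g_r=\sum_{j=0}^{r}\binom{n}{j}+\binom{n-1}{r}$, and $B_r$ is extremal, i.e. $N^t(B_r)$ and $N^t(B_r^c)$ are minimal for every integer $t>0$.
   Context: $X=[n]=\{1,\dots,n\}$, $X^{(j)}=\{B\subseteq X:|B|=j\}$, $X^{(\le j)}=\bigcup_{i\le j}X^{(i)}$. $Q_n$ is the hypercube with vertex set the power set of $[n]$ and metric $d(x,y)=|x\Delta y|$. For $A\subseteq Q_n$ and $t>0$, $N^t(A)=\{x\in Q_n:\min_{y\in A}d(x,y)\le t\}$; $N^t(A)$ is minimal if $|N^t(A)|\le |N^t(B)|$ for all $B\subseteq Q_n$ with $|B|=|A|$. $A$ is extremal if $N^t(A)$ and $N^t(Q_n\setminus A)$ are minimal for all $t>0$. *)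

theory Defs
  imports Main
begin

definition cube :: "nat \<Rightarrow> nat set set" where
  "cube n = Pow {1..n}"

definition hdist :: "nat set \<Rightarrow> nat set \<Rightarrow> nat" where
  "hdist x y = card ((x - y) \<union> (y - x))"

definition nbhd :: "nat \<Rightarrow> nat \<Rightarrow> nat set set \<Rightarrow> nat set set" where
  "nbhd n t A = {x \<in> cube n. \<exists>y\<in>A. hdist x y \<le> t}"

definition nbhd_minimal :: "nat \<Rightarrow> nat \<Rightarrow> nat set set \<Rightarrow> bool" where
  "nbhd_minimal n t A \<longleftrightarrow>
     (\<forall>B. B \<subseteq> cube n \<longrightarrow> card B = card A \<longrightarrow> card (nbhd n t A) \<le> card (nbhd n t B))"

definition extremal :: "nat \<Rightarrow> nat set set \<Rightarrow> bool" where
  "extremal n A \<longleftrightarrow>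
     (\<forall>t>0. nbhd_minimal n t A \<and> nbhd_minimal n t (cube n - A))"

definition Bset :: "nat \<Rightarrow> nat \<Rightarrow> nat set set" where
  "Bset n r = {B \<in> cube n. card B \<le> r}
     \<union> {B \<in> cube n. (card B = r + 1 \<or> card B = r + 2) \<and> {1,2} \<subseteq> B}"

end

theory Submission
  imports Defs
begin


definition lexl :: "nat set \<Rightarrow> nat set \<Rightarrow> bool" where
  "lexl x y \<longleftrightarrow> (\<exists>a. a \<in> x \<and> a \<notin> y \<and> (\<forall>b<a. b \<in> x \<longleftrightarrow> b \<in> y))"

definition sl :: "nat set \<Rightarrow> nat set \<Rightarrow> bool" where
  "sl x y \<longleftrightarrow> card x < card y \<or> (card x = card y \<and> lexl x y)"

lemma lexl_irrefl: "\<not> lexl x x"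
  unfolding lexl_def by blast

lemma lexl_asym: assumes "lexl x y" shows "\<not> lexl y x"
proof
  assume "lexl y x"
  then obtain a' where a': "a' \<in> y" "a' \<notin> x" "\<forall>b<a'. b \<in> y \<longleftrightarrow> b \<in> x"
    unfolding lexl_def by blast
  from assms obtain a where a: "a \<in> x" "a \<notin> y" "\<forall>b<a. b \<in> x \<longleftrightarrow> b \<in> y"
    unfolding lexl_def by blast
  show False
  proof (cases a a' rule: linorder_cases)
    case less then show ?thesis using a a' by blast
  next
    case equal then show ?thesis using a a' by blast
  next
    case greater then show ?thesis using a a' by blast
  qed
qed

lemma lexl_trans: assumes "lexl x y" "lexl y z" shows "lexl x z"
proof -
  from assms(1) obtain a where a: "a \<in> x" "a \<notin> y" "\<forall>b<a. b \<in> x \<longleftrightarrow> b \<in> y"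
    unfolding lexl_def by blast
  from assms(2) obtain c where c: "c \<in> y" "c \<notin> z" "\<forall>b<c. b \<in> y \<longleftrightarrow> b \<in> z"
    unfolding lexl_def by blast
  show ?thesis
  proof (cases a c rule: linorder_cases)
    case less
    then show ?thesis unfolding lexl_def using a c
      by (intro exI[of _ a]) auto
  next
    case equal then show ?thesis using a c by blast
  next
    case greater
    then show ?thesis unfolding lexl_def using a c
      by (intro exI[of _ c]) auto
  qed
qed

lemma lexl_total:
  assumes "finite x" "finite y" "x \<noteq> y" shows "lexl x y \<or> lexl y x"
proof -
  let ?D = "(x - y) \<union> (y - x)"
  have fD: "finite ?D" using assms by auto
  have nD: "?D \<noteq> {}" using assms(3) by auto
  define a where "a = Min ?D"
  have aD: "a \<in> ?D" unfolding a_def using fD nD by (rule Min_in)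
  have below: "\<forall>b<a. b \<in> x \<longleftrightarrow> b \<in> y"
  proof (intro allI impI)
    fix b assume "b < a"
    then have "b \<notin> ?D" using Min_le[OF fD] unfolding a_def by force
    then show "b \<in> x \<longleftrightarrow> b \<in> y" by blast
  qed
  show ?thesis
  proof (cases "a \<in> x")
    case True
    then have "a \<notin> y" using aD by blast
    then show ?thesis unfolding lexl_def using True below by blast
  next
    case False
    then have "a \<in> y" using aD by blast
    then show ?thesis unfolding lexl_def using False below by blast
  qed
qed

lemma sl_irrefl: "\<not> sl x x"
  unfolding sl_def using lexl_irrefl by auto

lemma sl_asym: "sl x y \<Longrightarrow> \<not> sl y x"
  unfolding sl_def using lexl_asym by auto

lemma sl_trans: "sl x y \<Longrightarrow> sl y z \<Longrightarrow> sl x z"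
  unfolding sl_def using lexl_trans by (smt (verit) order_less_trans order_le_less_trans)

lemma sl_total: "finite x \<Longrightarrow> finite y \<Longrightarrow> x \<noteq> y \<Longrightarrow> sl x y \<or> sl y x"
  unfolding sl_def using lexl_total[of x y] by (cases "card x" "card y" rule: linorder_cases) auto

lemma sl_card: "card x < card y \<Longrightarrow> sl x y"
  unfolding sl_def by simp

lemma lexl_insert:
  assumes "i \<notin> x" "i \<notin> y"
  shows "lexl (insert i x) (insert i y) \<longleftrightarrow> lexl x y"
proof
  assume "lexl (insert i x) (insert i y)"
  then obtain a where a: "a \<in> insert i x" "a \<notin> insert i y" "\<forall>b<a. b \<in> insert i x \<longleftrightarrow> b \<in> insert i y"
    unfolding lexl_def by blast
  have "a \<noteq> i" using a by blast
  then show "lexl x y" unfolding lexl_def using a assms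
    by (intro exI[of _ a]) auto
next
  assume "lexl x y"
  then obtain a where a: "a \<in> x" "a \<notin> y" "\<forall>b<a. b \<in> x \<longleftrightarrow> b \<in> y"
    unfolding lexl_def by blast
  have "a \<noteq> i" using a assms by blast
  then show "lexl (insert i x) (insert i y)" unfolding lexl_def using a assms
    by (intro exI[of _ a]) auto
qed

lemma sl_insert:
  assumes "finite x" "finite y" "i \<notin> x" "i \<notin> y"
  shows "sl (insert i x) (insert i y) \<longleftrightarrow> sl x y"
  unfolding sl_def using assms lexl_insert[OF assms(3,4)] by simp

lemma sl_remove:
  assumes "finite x" "finite y" "i \<in> x" "i \<in> y"
  shows "sl (x - {i}) (y - {i}) \<longleftrightarrow> sl x y"
proof -
  have "sl (insert i (x - {i})) (insert i (y - {i})) \<longleftrightarrow> sl (x - {i}) (y - {i})"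
    using assms by (intro sl_insert) auto
  moreover have "insert i (x - {i}) = x" "insert i (y - {i}) = y" using assms by auto
  ultimately show ?thesis by simp
qed



definition isInit :: "nat set \<Rightarrow> nat set set \<Rightarrow> bool" where
  "isInit U S \<longleftrightarrow> S \<subseteq> Pow U \<and> (\<forall>v\<in>S. \<forall>u\<in>Pow U. sl u v \<longrightarrow> u \<in> S)"

lemma init_nested:
  assumes U: "finite U" and S: "isInit U S" and T: "isInit U T" and c: "card S \<le> card T"
  shows "S \<subseteq> T"
proof (rule ccontr)
  assume "\<not> S \<subseteq> T"
  then obtain x where x: "x \<in> S" "x \<notin> T" by blast
  have fS: "finite S" using S U unfolding isInit_def using finite_subset[of S "Pow U"] by simp
  have xU: "x \<subseteq> U" using S x unfolding isInit_def by blast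
  have "T \<subseteq> S - {x}"
  proof
    fix y assume y: "y \<in> T"
    have yU: "y \<subseteq> U" using T y unfolding isInit_def by blast
    have "y \<noteq> x" using x y by blast
    then have "sl y x \<or> sl x y" using sl_total[of y x] finite_subset[OF xU U] finite_subset[OF yU U] by blast
    moreover have "\<not> sl x y" using T y x xU unfolding isInit_def by blast
    ultimately have "sl y x" by blast
    then have "y \<in> S" using S x yU unfolding isInit_def by blast
    then show "y \<in> S - {x}" using \<open>y \<noteq> x\<close> by blast
  qed
  then have "card T \<le> card (S - {x})" using fS by (intro card_mono) auto
  also have "\<dots> < card S" by (rule card_Diff1_less[OF fS x(1)])
  finally show False using c by simp
qed

lemma init_eq:
  "finite U \<Longrightarrow> isInit U S \<Longrightarrow> isInit U T \<Longrightarrow> card S = card T \<Longrightarrow> S = T"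
  using init_nested[of U S T] init_nested[of U T S] by simp

lemma init_finite: "finite U \<Longrightarrow> isInit U S \<Longrightarrow> finite S"
  unfolding isInit_def using finite_subset[of S "Pow U"] by simp

lemma init_union_card:
  assumes "finite U" "isInit U S" "isInit U T"
  shows "card (S \<union> T) = max (card S) (card T)"
proof (cases "card S \<le> card T")
  case True
  then have "S \<subseteq> T" using init_nested[of U S T] assms by simp
  then show ?thesis using True by (simp add: sup.absorb2)
next
  case False
  then have "T \<subseteq> S" using init_nested[of U T S] assms by simp
  then show ?thesis using False by (simp add: sup.absorb1)
qed

lemma least_exists:
  assumes "finite F" "F \<noteq> {}" "\<forall>x\<in>F. finite x"
  shows "\<exists>m\<in>F. \<forall>u\<in>F. \<not> sl u m"
  using assms
proof (induction F rule: finite_ne_induct)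
  case (singleton x)
  then show ?case using sl_irrefl by auto
next
  case (insert x F)
  then obtain m where m: "m \<in> F" "\<forall>u\<in>F. \<not> sl u m" by auto
  show ?case
  proof (cases "sl x m")
    case True
    have "\<forall>u\<in>insert x F. \<not> sl u x"
    proof
      fix u assume "u \<in> insert x F"
      then show "\<not> sl u x"
        using sl_irrefl[of x] m True sl_trans[of u x m] by auto
    qed
    then show ?thesis by blast
  next
    case False
    then show ?thesis using m by auto
  qed
qed

lemma init_exists:
  assumes U: "finite U"
  shows "m \<le> card (Pow U) \<Longrightarrow> \<exists>S. isInit U S \<and> card S = m"
proof (induction m)
  case 0
  then show ?case unfolding isInit_def by (intro exI[of _ "{}"]) auto
next
  case (Suc m)
  then obtain S where S: "isInit U S" "card S = m" using Suc.IH by (metis Suc_leD)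
  have fS: "finite S" using init_finite[OF U S(1)] .
  have sub: "S \<subseteq> Pow U" using S unfolding isInit_def by blast
  have "Pow U - S \<noteq> {}"
  proof
    assume "Pow U - S = {}"
    then have "Pow U \<subseteq> S" by blast
    then have "card (Pow U) \<le> card S" by (rule card_mono[OF fS])
    then show False using Suc.prems S(2) by simp
  qed
  moreover have "finite (Pow U - S)" using U by simp
  moreover have "\<forall>x\<in>Pow U - S. finite x" using U by (auto intro: finite_subset)
  ultimately obtain w where w: "w \<in> Pow U - S" "\<forall>u\<in>Pow U - S. \<not> sl u w"
    using least_exists[of "Pow U - S"] by metis
  have "isInit U (insert w S)"
    unfolding isInit_def
  proof (intro conjI ballI impI)
    show "insert w S \<subseteq> Pow U" using w sub by blast
  next
    fix v u assume v: "v \<in> insert w S" and u: "u \<in> Pow U" and "sl u v"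
    show "u \<in> insert w S"
    proof (cases "v = w")
      case True
      have "u \<in> S"
      proof (rule ccontr)
        assume "u \<notin> S"
        then have "u \<in> Pow U - S" using u by blast
        then show False using w(2) \<open>sl u v\<close> True by blast
      qed
      then show ?thesis by blast
    next
      case False
      then have "v \<in> S" using v by blast
      then have "u \<in> S" using S(1) u \<open>sl u v\<close> unfolding isInit_def by blast
      then show ?thesis by blast
    qed
  qed
  moreover have "card (insert w S) = Suc m" using w fS S(2) by simp
  ultimately show ?case by blast
qed



definition flip :: "nat \<Rightarrow> nat set \<Rightarrow> nat set" where
  "flip j y = (if j \<in> y then y - {j} else insert j y)"

definition nb :: "nat set \<Rightarrow> nat set set \<Rightarrow> nat set set" where
  "nb X A = {x. x \<subseteq> X \<and> (\<exists>y\<in>A. x = y \<or> (\<exists>j\<in>X. x = flip j y))}"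

lemma flip_flip[simp]: "flip j (flip j y) = y"
  unfolding flip_def by auto

lemma flip_sub: "y \<subseteq> X \<Longrightarrow> j \<in> X \<Longrightarrow> flip j y \<subseteq> X"
  unfolding flip_def by auto

lemma nb_sub: "nb X A \<subseteq> Pow X"
  unfolding nb_def by blast

lemma nb_mono: "A \<subseteq> B \<Longrightarrow> nb X A \<subseteq> nb X B"
  unfolding nb_def by blast

lemma sub_nb: "A \<subseteq> Pow X \<Longrightarrow> A \<subseteq> nb X A"
  unfolding nb_def by blast

lemma flip_in_nb: assumes "y \<in> A" "A \<subseteq> Pow X" "j \<in> X" shows "flip j y \<in> nb X A"
proof -
  have "y \<subseteq> X" using assms by blast
  then have "flip j y \<subseteq> X" using flip_sub assms(3) by blast
  then show ?thesis unfolding nb_def using assms(1,3) by blast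
qed

lemma finite_nb: "finite X \<Longrightarrow> finite (nb X A)"
  using nb_sub[of X A] finite_subset[of "nb X A" "Pow X"] by simp

lemma nb_cases:
  assumes "x \<in> nb X A"
  obtains "x \<in> A" | y j where "y \<in> A" "j \<in> X" "x = flip j y"
  using assms unfolding nb_def by blast

lemma nb_init:
  assumes X: "finite X" and S: "isInit X S"
  shows "isInit X (nb X S)"
  unfolding isInit_def
proof (intro conjI ballI impI)
  show "nb X S \<subseteq> Pow X" by (rule nb_sub)
next
  have SP: "S \<subseteq> Pow X" using S unfolding isInit_def by blast
  have Sd: "\<And>v u. v \<in> S \<Longrightarrow> u \<subseteq> X \<Longrightarrow> sl u v \<Longrightarrow> u \<in> S"
    using S unfolding isInit_def by blast
  fix v u assume v: "v \<in> nb X S" and u: "u \<in> Pow X" and uv: "sl u v"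
  have uX: "u \<subseteq> X" using u by blast
  have fu: "finite u" using uX X finite_subset by blast
  show "u \<in> nb X S"
    using v
  proof (cases rule: nb_cases)
    case 1
    then show ?thesis using Sd uX uv sub_nb[OF SP] by blast
  next
    case (2 w j)
    have wX: "w \<subseteq> X" using 2 SP by blast
    have fw: "finite w" using wX X finite_subset by blast
    show ?thesis
    proof (cases "j \<in> w")
      case True
      then have "v = w - {j}" using 2 unfolding flip_def by simp
      then have "card v < card w" using card_Diff1_less[OF fw True] by simp
      then have "sl v w" by (rule sl_card)
      then have "v \<in> S" using Sd 2 wX \<open>v = w - {j}\<close> by blast
      then have "u \<in> S" using Sd uX uv by blast
      then show ?thesis using sub_nb[OF SP] by blast
    next
      case False
      note jw = this
      then have vw: "v = insert j w" using 2 unfolding flip_def by simp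
      have cv: "card v = Suc (card w)" using vw False fw by simp
      show ?thesis
      proof (cases "card u < card v")
        case True
        show ?thesis
        proof (cases "u = {}")
          case True
          show ?thesis
          proof (cases "w = {}")
            case True
            then show ?thesis using \<open>u = {}\<close> 2 sub_nb[OF SP] by blast
          next
            case False
            then have "card u < card w" using \<open>u = {}\<close> fw by (simp add: card_gt_0_iff)
            then have "u \<in> S" using Sd[OF 2(1) uX] sl_card by blast
            then show ?thesis using sub_nb[OF SP] by blast
          qed
        next
          case False
          then obtain k where k: "k \<in> u" by blast
          have "card u > 0" using k fu card_gt_0_iff by blast
          then have "card (u - {k}) < card w" using True cv k fu by simp
          then have "u - {k} \<in> S" using Sd[OF 2(1)] uX sl_card by blast
          moreover have "u = flip k (u - {k})" using k unfolding flip_def by auto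
          moreover have "k \<in> X" using k uX by blast
          ultimately show ?thesis using flip_in_nb[OF _ SP] by metis
        qed
      next
        case False
        then have cuv: "card u = card v" using uv unfolding sl_def by simp
        then have "lexl u v" using uv unfolding sl_def by simp
        then obtain a where a: "a \<in> u" "a \<notin> v" "\<forall>b<a. b \<in> u \<longleftrightarrow> b \<in> v"
          unfolding lexl_def by blast
        have aj: "a \<noteq> j" using a vw by blast
        show ?thesis
        proof (cases "j \<in> u")
          case True
          let ?u' = "u - {j}"
          have c1: "card ?u' = card w" using True cuv cv fu by simp
          have "lexl ?u' w" unfolding lexl_def
            using a aj vw jw by (intro exI[of _ a]) auto
          then have "sl ?u' w" using c1 unfolding sl_def by simp
          then have "?u' \<in> S" using Sd[OF 2(1)] uX by blast
          moreover have "u = flip j ?u'" using True unfolding flip_def by auto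
          ultimately show ?thesis using flip_in_nb[OF _ SP 2(2)] by metis
        next
          case False
          note ju = this
          have ja: "a < j"
          proof (rule ccontr)
            assume "\<not> a < j"
            then have "j < a" using aj by simp
            then have "j \<in> u \<longleftrightarrow> j \<in> v" using a(3) by blast
            then show False using ju vw by blast
          qed
          show ?thesis
          proof (cases "\<exists>e\<in>u. a < e")
            case True
            then obtain e where e: "e \<in> u" "a < e" by blast
            let ?u' = "u - {e}"
            have c1: "card ?u' = card w" using e cuv cv fu by simp
            have "lexl ?u' w" unfolding lexl_def
              using a e ja vw jw by (intro exI[of _ a]) auto
            then have "sl ?u' w" using c1 unfolding sl_def by simp
            then have "?u' \<in> S" using Sd[OF 2(1)] uX by blast
            moreover have "u = flip e ?u'" using e unfolding flip_def by auto
            moreover have "e \<in> X" using e uX by blast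
            ultimately show ?thesis using flip_in_nb[OF _ SP] by metis
          next
            case False
            let ?u' = "u - {a}"
            have sub: "?u' \<subseteq> w"
            proof
              fix b assume b: "b \<in> ?u'"
              have "b \<in> u" "b \<noteq> a" using b by auto
              then have "\<not> a < b" using False by blast
              then have "b < a" using \<open>b \<noteq> a\<close> by simp
              then have "b \<in> v" using a b by blast
              moreover have "b \<noteq> j" using \<open>b < a\<close> ja by simp
              ultimately show "b \<in> w" using vw by blast
            qed
            have "card ?u' = card w" using a cuv cv fu by simp
            then have "?u' = w" using sub fw by (simp add: card_subset_eq)
            moreover have "u = flip a ?u'" using a unfolding flip_def by auto
            moreover have "a \<in> X" using a uX by blast
            ultimately show ?thesis using flip_in_nb[OF 2(1) SP] by metis
          qed
        qed
      qed
    qed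
  qed
qed



definition glue :: "nat \<Rightarrow> nat set set \<Rightarrow> nat set set \<Rightarrow> nat set set" where
  "glue i P Q = P \<union> insert i ` Q"

definition low :: "nat \<Rightarrow> nat set set \<Rightarrow> nat set set" where
  "low i A = {x\<in>A. i \<notin> x}"

definition up :: "nat \<Rightarrow> nat set set \<Rightarrow> nat set set" where
  "up i A = (\<lambda>x. x - {i}) ` {x\<in>A. i \<in> x}"

lemma glue_low_up: "glue i (low i A) (up i A) = A"
proof -
  have "insert i ` up i A = {x\<in>A. i \<in> x}"
    unfolding up_def image_image by (auto simp: insert_absorb image_iff)
  then show ?thesis unfolding glue_def low_def by auto
qed

lemma low_glue: "\<forall>x\<in>P. i \<notin> x \<Longrightarrow> low i (glue i P Q) = P"
  unfolding low_def glue_def by auto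

lemma up_glue: assumes "\<forall>x\<in>Q. i \<notin> x" "\<forall>x\<in>P. i \<notin> x" shows "up i (glue i P Q) = Q"
proof -
  have "{x \<in> glue i P Q. i \<in> x} = insert i ` Q"
    using assms unfolding glue_def by auto
  moreover have "(\<lambda>x. x - {i}) ` (insert i ` Q) = (\<lambda>x. x) ` Q"
    unfolding image_image using assms(1) by (intro image_cong) auto
  ultimately show ?thesis unfolding up_def by simp
qed

lemma card_glue:
  assumes "finite P" "finite Q" "\<forall>x\<in>P. i \<notin> x" "\<forall>x\<in>Q. i \<notin> x"
  shows "card (glue i P Q) = card P + card Q"
proof -
  have inj: "inj_on (insert i) Q"
    using assms(4) unfolding inj_on_def by (metis insert_ident)
  have disj: "P \<inter> insert i ` Q = {}" using assms(3) by auto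
  have "card (glue i P Q) = card P + card (insert i ` Q)"
    unfolding glue_def using assms(1,2) disj by (simp add: card_Un_disjoint)
  also have "card (insert i ` Q) = card Q" using inj by (rule card_image)
  finally show ?thesis .
qed

lemma low_sub: "A \<subseteq> Pow X \<Longrightarrow> low i A \<subseteq> Pow (X - {i})"
  unfolding low_def by auto

lemma up_sub: "A \<subseteq> Pow X \<Longrightarrow> up i A \<subseteq> Pow (X - {i})"
  unfolding up_def by auto

lemma flip_ins_ne: "j \<noteq> i \<Longrightarrow> flip j (insert i q) = insert i (flip j q)"
  unfolding flip_def by auto

lemma flip_notin: "i \<notin> y \<Longrightarrow> flip i y = insert i y"
  unfolding flip_def by auto

lemma flip_ins_same: "i \<notin> q \<Longrightarrow> flip i (insert i q) = q"
  unfolding flip_def by auto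

lemma nb_glue:
  assumes iX: "i \<in> X" and P: "P \<subseteq> Pow (X - {i})" and Q: "Q \<subseteq> Pow (X - {i})"
  shows "nb X (glue i P Q) = glue i (nb (X - {i}) P \<union> Q) (nb (X - {i}) Q \<union> P)"
    (is "?L = ?R")
proof
  have GX: "glue i P Q \<subseteq> Pow X" using P Q iX unfolding glue_def by auto
  show "?L \<subseteq> ?R"
  proof
    fix x assume x: "x \<in> ?L"
    then show "x \<in> ?R"
    proof (cases rule: nb_cases)
      case 1
      then show ?thesis
      proof (cases "x \<in> P")
        case True
        then show ?thesis using sub_nb[OF P] unfolding glue_def by blast
      next
        case False
        then obtain q where "q \<in> Q" "x = insert i q" using 1 unfolding glue_def by blast
        then show ?thesis using sub_nb[OF Q] unfolding glue_def by blast
      qed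
    next
      case (2 y j)
      show ?thesis
      proof (cases "y \<in> P")
        case True
        have iy: "i \<notin> y" using True P by blast
        show ?thesis
        proof (cases "j = i")
          case True
          then have "x = insert i y" using 2 iy flip_notin by simp
          then show ?thesis using \<open>y \<in> P\<close> unfolding glue_def by blast
        next
          case False
          then have "j \<in> X - {i}" using 2 by blast
          then have "x \<in> nb (X - {i}) P" using flip_in_nb[OF \<open>y \<in> P\<close> P] 2 by simp
          then show ?thesis unfolding glue_def by blast
        qed
      next
        case False
        then obtain q where q: "q \<in> Q" "y = insert i q" using 2 unfolding glue_def by blast
        have iq: "i \<notin> q" using q Q by blast
        show ?thesis
        proof (cases "j = i")
          case True
          then have "x = q" using 2 q iq flip_ins_same by simp
          then show ?thesis using q unfolding glue_def by blast
        next
          case False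
          then have jY: "j \<in> X - {i}" using 2 by blast
          have "x = insert i (flip j q)" using 2 q False flip_ins_ne by simp
          moreover have "flip j q \<in> nb (X - {i}) Q" using flip_in_nb[OF q(1) Q jY] .
          ultimately show ?thesis unfolding glue_def by blast
        qed
      qed
    qed
  qed
next
  have GX: "glue i P Q \<subseteq> Pow X" using P Q iX unfolding glue_def by auto
  show "?R \<subseteq> ?L"
  proof
    fix x assume x: "x \<in> ?R"
    have PG: "P \<subseteq> glue i P Q" and QG: "insert i ` Q \<subseteq> glue i P Q" unfolding glue_def by auto
    consider (a) "x \<in> nb (X - {i}) P" | (b) "x \<in> Q" | (c) z where "z \<in> nb (X - {i}) Q" "x = insert i z"
      | (d) z where "z \<in> P" "x = insert i z"
      using x unfolding glue_def by blast
    then show "x \<in> ?L"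
    proof cases
      case a
      then show ?thesis
      proof (cases rule: nb_cases)
        case 1
        then show ?thesis using sub_nb[OF GX] PG by blast
      next
        case (2 y j)
        have "j \<in> X" using 2 by blast
        then show ?thesis using flip_in_nb[OF _ GX] 2 PG by blast
      qed
    next
      case b
      have iq: "i \<notin> x" using b Q by blast
      have "insert i x \<in> glue i P Q" using b QG by blast
      then have "flip i (insert i x) \<in> ?L" using flip_in_nb[OF _ GX iX] by blast
      then show ?thesis using flip_ins_same[OF iq] by simp
    next
      case c
      from c(1) show ?thesis
      proof (cases rule: nb_cases)
        case 1
        then show ?thesis using c(2) sub_nb[OF GX] QG by blast
      next
        case (2 y j)
        have jX: "j \<in> X" "j \<noteq> i" using 2 by auto
        have "insert i y \<in> glue i P Q" using 2 QG by blast
        then have "flip j (insert i y) \<in> ?L" using flip_in_nb[OF _ GX jX(1)] by blast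
        then show ?thesis using flip_ins_ne[OF jX(2)] c(2) 2 by simp
      qed
    next
      case d
      have iz: "i \<notin> z" using d P by blast
      have "z \<in> glue i P Q" using d PG by blast
      then have "flip i z \<in> ?L" using flip_in_nb[OF _ GX iX] by blast
      then show ?thesis using flip_notin[OF iz] d by simp
    qed
  qed
qed



definition pos :: "nat set \<Rightarrow> nat set \<Rightarrow> nat" where
  "pos X x = card {u \<in> Pow X. sl u x}"

lemma pos_mono:
  assumes X: "finite X" and "x \<subseteq> X" "u \<subseteq> X" "sl u x"
  shows "pos X u < pos X x"
proof -
  have "{w \<in> Pow X. sl w u} \<subset> {w \<in> Pow X. sl w x}"
  proof
    show "{w \<in> Pow X. sl w u} \<subseteq> {w \<in> Pow X. sl w x}"
      using assms(4) sl_trans by blast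
    show "{w \<in> Pow X. sl w u} \<noteq> {w \<in> Pow X. sl w x}"
      using assms(3,4) sl_irrefl by blast
  qed
  then show ?thesis unfolding pos_def using X by (intro psubset_card_mono) auto
qed

lemma sum_lt_core:
  fixes f :: "nat set \<Rightarrow> nat"
  assumes "finite D1" "finite D2" "D1 \<noteq> {}" "card D1 = card D2"
    and lt: "\<forall>a\<in>D1. \<forall>b\<in>D2. f a < f b"
  shows "sum f D1 < sum f D2"
proof -
  define M where "M = Max (f ` D1)"
  have M1: "\<forall>a\<in>D1. f a \<le> M" unfolding M_def using assms(1) by auto
  have "M \<in> f ` D1" unfolding M_def using assms(1,3) by (intro Max_in) auto
  then obtain a0 where a0: "a0 \<in> D1" "f a0 = M" by blast
  have M2: "\<forall>b\<in>D2. Suc M \<le> f b" using lt a0 by force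
  have "sum f D1 \<le> card D1 * M" using sum_bounded_above[of D1 f M] M1 by simp
  also have "\<dots> < card D1 * Suc M" using assms(1,3) by (simp add: card_gt_0_iff)
  also have "\<dots> = card D2 * Suc M" using assms(4) by simp
  also have "\<dots> \<le> sum f D2" using sum_bounded_below[of D2 "Suc M" f] M2 by simp
  finally show ?thesis .
qed

lemma rearr:
  fixes f :: "nat set \<Rightarrow> nat"
  assumes U: "finite U" and f: "\<forall>u\<in>Pow U. \<forall>v\<in>Pow U. sl u v \<longrightarrow> f u < f v"
    and S: "S \<subseteq> Pow U" and T: "isInit U T" and c: "card S = card T"
  shows "sum f T \<le> sum f S \<and> (S \<noteq> T \<longrightarrow> sum f T < sum f S)"
proof -
  have fS: "finite S" using S U finite_subset[of S "Pow U"] by simp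
  have fT: "finite T" using init_finite[OF U T] .
  have TP: "T \<subseteq> Pow U" using T unfolding isInit_def by blast
  let ?D1 = "T - S" and ?D2 = "S - T"
  have cS: "card S = card (S \<inter> T) + card ?D2" using fS
    by (metis card_Int_Diff)
  have cT: "card T = card (S \<inter> T) + card ?D1" using fT
    by (metis card_Int_Diff inf_commute)
  have cD: "card ?D1 = card ?D2" using cS cT c by simp
  have sS: "sum f S = sum f (S \<inter> T) + sum f ?D2" using fS by (metis sum.Int_Diff)
  have sT: "sum f T = sum f (S \<inter> T) + sum f ?D1" using fT by (metis sum.Int_Diff inf_commute)
  have lt: "\<forall>a\<in>?D1. \<forall>b\<in>?D2. f a < f b"
  proof (intro ballI)
    fix a b assume a: "a \<in> ?D1" and b: "b \<in> ?D2"
    have aU: "a \<subseteq> U" using a TP by blast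
    have bU: "b \<subseteq> U" using b S by blast
    have "a \<noteq> b" using a b by blast
    then have "sl a b \<or> sl b a" using sl_total finite_subset[OF aU U] finite_subset[OF bU U] by blast
    moreover have "\<not> sl b a" using T a b bU unfolding isInit_def by blast
    ultimately have "sl a b" by blast
    then show "f a < f b" using f aU bU by blast
  qed
  show ?thesis
  proof (cases "?D1 = {}")
    case True
    then have "card ?D2 = 0" using cD by (metis card.empty)
    then have "?D2 = {}" using fS by simp
    then have "S = T" using True by blast
    then show ?thesis by simp
  next
    case False
    have "sum f ?D1 < sum f ?D2"
      using sum_lt_core[of ?D1 ?D2 f] False cD lt fS fT by simp
    then show ?thesis using sS sT by simp
  qed
qed



definition compressed :: "nat set \<Rightarrow> nat set set \<Rightarrow> bool" where
  "compressed X A \<longleftrightarrow> (\<forall>i\<in>X. isInit (X - {i}) (low i A) \<and> isInit (X - {i}) (up i A))"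

lemma F2:
  assumes X: "finite X" and A: "A \<subseteq> Pow X" and C: "compressed X A"
    and u: "u \<subseteq> X" "u \<notin> A" and v: "v \<in> A" and uv: "sl u v"
  shows "v = X - u"
proof -
  have vX: "v \<subseteq> X" using v A by blast
  have fu: "finite u" using u X finite_subset by blast
  have fv: "finite v" using vX X finite_subset by blast
  have key: "i \<in> v \<longleftrightarrow> i \<notin> u" if i: "i \<in> X" for i
  proof -
    have I1: "isInit (X - {i}) (low i A)" and I2: "isInit (X - {i}) (up i A)"
      using C i unfolding compressed_def by auto
    have n1: "\<not> (i \<in> u \<and> i \<in> v)"
    proof
      assume h: "i \<in> u \<and> i \<in> v"
      have "sl (u - {i}) (v - {i})" using sl_remove[OF fu fv] h uv by simp
      moreover have "v - {i} \<in> up i A" unfolding up_def using v h by blast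
      moreover have "u - {i} \<in> Pow (X - {i})" using u by blast
      ultimately have "u - {i} \<in> up i A" using I2 unfolding isInit_def by blast
      then obtain w where w: "w \<in> A" "i \<in> w" "u - {i} = w - {i}" unfolding up_def by blast
      then have "w = u" using h by (metis insert_Diff)
      then show False using w u by blast
    qed
    have n2: "\<not> (i \<notin> u \<and> i \<notin> v)"
    proof
      assume h: "i \<notin> u \<and> i \<notin> v"
      have "v \<in> low i A" unfolding low_def using v h by blast
      moreover have "u \<in> Pow (X - {i})" using u h by blast
      ultimately have "u \<in> low i A" using I1 uv unfolding isInit_def by blast
      then show False using u unfolding low_def by blast
    qed
    show ?thesis using n1 n2 by blast
  qed
  show ?thesis
  proof
    show "v \<subseteq> X - u" using key vX by blast
    show "X - u \<subseteq> v" using key by blast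
  qed
qed

lemma flip_compl: "j \<in> X \<Longrightarrow> w \<subseteq> X \<Longrightarrow> flip j (X - w) = X - flip j w"
  unfolding flip_def by auto

lemma nb_compl:
  assumes z: "z \<subseteq> X"
  shows "nb X {X - z} = (\<lambda>w. X - w) ` nb X {z}"
proof
  show "nb X {X - z} \<subseteq> (\<lambda>w. X - w) ` nb X {z}"
  proof
    fix w' assume "w' \<in> nb X {X - z}"
    then show "w' \<in> (\<lambda>w. X - w) ` nb X {z}"
    proof (cases rule: nb_cases)
      case 1
      then have "w' = X - z" by simp
      moreover have "z \<in> nb X {z}" using sub_nb[of "{z}" X] z by blast
      ultimately show ?thesis by blast
    next
      case (2 y j)
      then have "w' = X - flip j z" using flip_compl z by simp
      moreover have "flip j z \<in> nb X {z}" using flip_in_nb[of z "{z}" X j] z 2 by blast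
      ultimately show ?thesis by blast
    qed
  qed
next
  show "(\<lambda>w. X - w) ` nb X {z} \<subseteq> nb X {X - z}"
  proof
    fix w' assume "w' \<in> (\<lambda>w. X - w) ` nb X {z}"
    then obtain w where w: "w \<in> nb X {z}" "w' = X - w" by blast
    from w(1) show "w' \<in> nb X {X - z}"
    proof (cases rule: nb_cases)
      case 1
      then show ?thesis using w(2) sub_nb[of "{X - z}" X] by blast
    next
      case (2 y j)
      then have "w' = flip j (X - z)" using flip_compl z w(2) by simp
      then show ?thesis using flip_in_nb[of "X - z" "{X - z}" X j] 2 by blast
    qed
  qed
qed

lemma card_nb_compl:
  assumes X: "finite X" and z: "z \<subseteq> X"
  shows "card (nb X {X - z}) = card (nb X {z})"
proof -
  have "\<forall>a\<in>nb X {z}. X - (X - a) = a" using nb_sub[of X "{z}"] by auto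
  then have "inj_on (\<lambda>w. X - w) (nb X {z})"
    by (intro inj_on_inverseI[of _ "\<lambda>w. X - w"]) auto
  then show ?thesis using nb_compl[OF z] by (simp add: card_image)
qed



lemma final_step:
  assumes X: "finite X" and A: "A \<subseteq> Pow X" and C: "compressed X A"
  shows "\<exists>S. isInit X S \<and> card S = card A \<and> card (nb X S) \<le> card (nb X A)"
proof (cases "isInit X A")
  case True
  then show ?thesis by blast
next
  case False
  have fX: "\<And>z. z \<subseteq> X \<Longrightarrow> finite z" using X finite_subset by blast
  have fA: "finite A" using A X finite_subset[of A "Pow X"] by simp
  from False obtain v u where v: "v \<in> A" and u: "u \<in> Pow X" "sl u v" "u \<notin> A"
    using A unfolding isInit_def by blast
  have ne: "Pow X - A \<noteq> {}" using u by blast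
  have "finite (Pow X - A)" using X by simp
  moreover have "\<forall>z\<in>Pow X - A. finite z" using fX by blast
  ultimately obtain x where x: "x \<in> Pow X - A" "\<forall>z\<in>Pow X - A. \<not> sl z x"
    using least_exists[of "Pow X - A"] ne by metis
  have xX: "x \<subseteq> X" and xA: "x \<notin> A" using x by auto
  have F1: "\<And>z. z \<subseteq> X \<Longrightarrow> sl z x \<Longrightarrow> z \<in> A" using x(2) by blast
  have "sl x v"
  proof -
    have "u = x \<or> sl x u"
      using sl_total[of u x] fX xX u x(2) by blast
    then show ?thesis using u(2) sl_trans by blast
  qed
  define y where "y = X - x"
  have vy: "v = y" unfolding y_def using F2[OF X A C xX xA v \<open>sl x v\<close>] .
  have yA: "y \<in> A" using v vy by simp
  have xy: "sl x y" using \<open>sl x v\<close> vy by simp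
  have yX: "y \<subseteq> X" unfolding y_def by blast
  have F2': "\<And>z. z \<subseteq> X \<Longrightarrow> z \<notin> A \<Longrightarrow> sl z y \<Longrightarrow> z = x"
  proof -
    fix z assume z: "z \<subseteq> X" "z \<notin> A" "sl z y"
    have "y = X - z" using F2[OF X A C z(1) z(2) yA z(3)] .
    then show "z = x" using z(1) xX unfolding y_def by blast
  qed
  define P where "P = {z \<in> Pow X. sl z x}"
  have PA: "P \<subseteq> A" unfolding P_def using F1 by blast
  have Aeq: "A = insert y P"
  proof
    show "insert y P \<subseteq> A" using PA yA by blast
    show "A \<subseteq> insert y P"
    proof
      fix w assume w: "w \<in> A"
      have wX: "w \<subseteq> X" using w A by blast
      have "w \<noteq> x" using w xA by blast
      then have "sl w x \<or> sl x w" using sl_total fX wX xX by blast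
      then show "w \<in> insert y P"
      proof
        assume "sl w x" then show ?thesis unfolding P_def using wX by blast
      next
        assume "sl x w"
        then have "w = X - x" using F2[OF X A C xX xA w] by simp
        then show ?thesis unfolding y_def by blast
      qed
    qed
  qed
  define S where "S = insert x P"
  have SI: "isInit X S"
    unfolding isInit_def S_def
  proof (intro conjI ballI impI)
    show "insert x P \<subseteq> Pow X" using xX unfolding P_def by blast
  next
    fix a b assume a: "a \<in> insert x P" and b: "b \<in> Pow X" and ba: "sl b a"
    then have "sl b x" unfolding P_def using sl_trans by blast
    then show "b \<in> insert x P" unfolding P_def using b by blast
  qed
  have fP: "finite P" using PA fA finite_subset by blast
  have xP: "x \<notin> P" unfolding P_def using sl_irrefl by blast
  have yP: "y \<notin> P" unfolding P_def using sl_asym xy by blast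
  have cS: "card S = card A" unfolding S_def using Aeq fP xP yP by simp
  have SP: "S \<subseteq> Pow X" using SI unfolding isInit_def by blast
  show ?thesis
  proof (cases "P = {}")
    case True
    then have "S = {x}" "A = {y}" using Aeq unfolding S_def by auto
    then have "card (nb X S) = card (nb X A)"
      using card_nb_compl[OF X xX] unfolding y_def by simp
    then show ?thesis using SI cS by auto
  next
    case False
    then obtain z0 where z0: "z0 \<in> P" by blast
    have "x \<noteq> {}"
    proof
      assume "x = {}"
      then have "sl z0 {}" using z0 unfolding P_def by simp
      moreover have "finite z0" using z0 fX unfolding P_def by blast
      ultimately show False unfolding sl_def lexl_def by auto
    qed
    then obtain k where k: "k \<in> x" by blast
    have fx: "finite x" using fX xX by blast
    have AN: "A \<subseteq> nb X A" using sub_nb[OF A] .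
    have xkP: "x - {k} \<in> P"
    proof -
      have "card (x - {k}) < card x" using card_Diff1_less[OF fx k] .
      then have "sl (x - {k}) x" by (rule sl_card)
      then show ?thesis unfolding P_def using xX by blast
    qed
    have xN: "x \<in> nb X A"
    proof -
      have "x = flip k (x - {k})" using k unfolding flip_def by auto
      moreover have "k \<in> X" using k xX by blast
      ultimately show ?thesis using flip_in_nb[OF _ A] xkP PA by (metis subsetD)
    qed
    have flN: "flip j x \<in> nb X A" if jX: "j \<in> X" for j
    proof (cases "j \<in> x")
      case True
      then have "flip j x = x - {j}" unfolding flip_def by simp
      moreover have "card (x - {j}) < card x" using card_Diff1_less[OF fx True] .
      then have "sl (x - {j}) x" by (rule sl_card)
      then have "x - {j} \<in> P" unfolding P_def using xX by blast
      ultimately show ?thesis using PA AN by auto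
    next
      case False
      note jx = this
      then have fj: "flip j x = insert j x" unfolding flip_def by simp
      have cy: "card y = card (X - x)" unfolding y_def by simp
      show ?thesis
      proof (cases "card x = card y")
        case False
        then have cxy: "card x < card y" using xy unfolding sl_def by auto
        define z where "z = insert j x - {k}"
        have kj: "k \<noteq> j" using k jx by blast
        have zX: "z \<subseteq> X" unfolding z_def using jX xX by blast
        have cz: "card z = card x" unfolding z_def using fx k kj jx by simp
        have zx: "z \<noteq> x" unfolding z_def using kj jx by blast
        have ins: "insert j x = flip k z" unfolding z_def flip_def using k kj by auto
        have "z \<in> A"
        proof (rule ccontr)
          assume "z \<notin> A"
          moreover have "sl z y" using cz cxy by (intro sl_card) simp
          ultimately have "z = x" using F2' zX by blast
          then show False using zx by blast
        qed
        then have "flip k z \<in> nb X A" using flip_in_nb[OF _ A] k xX by blast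
        then show ?thesis using fj ins by simp
      next
        case True
        note cxy = this
        show ?thesis
        proof (cases "\<exists>j'\<in>x. j < j'")
          case True
          then obtain j' where j': "j' \<in> x" "j < j'" by blast
          define z where "z = insert j x - {j'}"
          have zX: "z \<subseteq> X" unfolding z_def using jX xX by blast
          have cz: "card z = card x" unfolding z_def using fx j' jx by auto
          have "lexl z x" unfolding lexl_def z_def using j' jx
            by (intro exI[of _ j]) auto
          then have "sl z x" using cz unfolding sl_def by simp
          then have "z \<in> A" using PA zX unfolding P_def by blast
          moreover have "insert j x = flip j' z" unfolding z_def flip_def using j' jx by auto
          moreover have "j' \<in> X" using j' xX by blast
          ultimately show ?thesis using flip_in_nb[OF _ A] fj by metis
        next
          case False
          have below: "\<forall>j'\<in>x. j' < j"
          proof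
            fix j' assume "j' \<in> x"
            then have "j' \<noteq> j" "\<not> j < j'" using jx False by auto
            then show "j' < j" by simp
          qed
          have c1: "card x = 1"
          proof (rule ccontr)
            assume "card x \<noteq> 1"
            moreover have "card x \<noteq> 0" using \<open>x \<noteq> {}\<close> fx by simp
            ultimately have c2: "card x \<ge> 2" by simp
            have "lexl x y" using xy cxy unfolding sl_def by simp
            then obtain a where a: "a \<in> x" "a \<notin> y" "\<forall>b<a. b \<in> x \<longleftrightarrow> b \<in> y"
              unfolding lexl_def by blast
            have bX: "\<forall>b<a. b \<notin> X"
            proof (intro allI impI)
              fix b assume "b < a"
              then have "b \<in> x \<longleftrightarrow> b \<in> y" using a by blast
              then show "b \<notin> X" unfolding y_def by blast
            qed
            define e where "e = Max x"
            have ex: "e \<in> x" unfolding e_def using fx \<open>x \<noteq> {}\<close> by simp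
            have ae: "a \<noteq> e"
            proof
              assume "a = e"
              have "x \<subseteq> {a}"
              proof
                fix b assume b: "b \<in> x"
                then have "b \<le> e" unfolding e_def using fx by simp
                moreover have "\<not> b < a" using b bX xX by blast
                ultimately show "b \<in> {a}" using \<open>a = e\<close> by simp
              qed
              then have "card x \<le> 1" using card_mono[of "{a}" x] by simp
              then show False using c2 by simp
            qed
            have ej: "e < j" using below ex by blast
            define x' where "x' = insert j (x - {e})"
            have x'X: "x' \<subseteq> X" unfolding x'_def using jX xX by blast
            have "card x > 0" using fx ex card_gt_0_iff by blast
            then have cx': "card x' = card x" unfolding x'_def using fx ex jx by auto
            have "lexl x x'" unfolding lexl_def x'_def using ex ej jx
              by (intro exI[of _ e]) auto
            then have s1: "sl x x'" using cx' unfolding sl_def by simp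
            have "lexl x' y" unfolding lexl_def
            proof (intro exI[of _ a] conjI allI impI)
              show "a \<in> x'" unfolding x'_def using a ae by blast
              show "a \<notin> y" using a by blast
              fix b assume "b < a"
              then have "b \<notin> X" using bX by blast
              then show "b \<in> x' \<longleftrightarrow> b \<in> y" using x'X yX by blast
            qed
            then have s2: "sl x' y" using cx' cxy unfolding sl_def by simp
            have "x' \<notin> A"
            proof
              assume "x' \<in> A"
              then have "x' = y \<or> x' \<in> P" using Aeq by blast
              then show False
              proof
                assume "x' = y" then show False using s2 sl_irrefl by simp
              next
                assume "x' \<in> P" then have "sl x' x" unfolding P_def by blast
                then show False using s1 sl_asym by blast
              qed
            qed
            then have "x' = x" using F2' x'X s2 by blast
            then show False using jx unfolding x'_def by blast
          qed
          then obtain e where xe: "x = {e}" using card_1_singletonE by blast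
          have "card y = 1" using c1 cxy by simp
          then obtain j2 where yj2: "y = {j2}" using card_1_singletonE by blast
          have "j \<in> y" unfolding y_def using jX jx by blast
          then have yj: "y = {j}" using yj2 by simp
          have "e \<notin> y" unfolding y_def using xe by blast
          then have "flip e y = insert j x" unfolding flip_def using xe yj by auto
          moreover have "e \<in> X" using xe xX by blast
          ultimately show ?thesis using flip_in_nb[OF yA A] fj by metis
        qed
      qed
    qed
    have "nb X S \<subseteq> nb X A"
    proof
      fix w assume "w \<in> nb X S"
      then show "w \<in> nb X A"
      proof (cases rule: nb_cases)
        case 1
        then show ?thesis using xN PA AN unfolding S_def by blast
      next
        case (2 s j)
        show ?thesis
        proof (cases "s = x")
          case True
          then show ?thesis using flN 2 by blast
        next
          case False
          then have "s \<in> A" using 2 PA unfolding S_def by blast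
          then show ?thesis using flip_in_nb[OF _ A] 2 by blast
        qed
      qed
    qed
    then have "card (nb X S) \<le> card (nb X A)" using finite_nb[OF X] by (intro card_mono)
    then show ?thesis using SI cS by blast
  qed
qed



lemma sum_glue:
  assumes "finite P" "finite Q" "\<forall>x\<in>P. i \<notin> x" "\<forall>x\<in>Q. i \<notin> x"
  shows "sum f (glue i P Q) = sum f P + sum (\<lambda>x. f (insert i x)) Q"
proof -
  have inj: "inj_on (insert i) Q"
    using assms(4) unfolding inj_on_def by (metis insert_ident)
  have disj: "P \<inter> insert i ` Q = {}" using assms(3) by auto
  have "sum f (glue i P Q) = sum f P + sum f (insert i ` Q)"
    unfolding glue_def using assms(1,2) disj by (simp add: sum.union_disjoint)
  also have "sum f (insert i ` Q) = sum (\<lambda>x. f (insert i x)) Q"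
    using sum.reindex[OF inj] by simp
  finally show ?thesis .
qed

lemma harper_gen:
  "finite X \<Longrightarrow> A \<subseteq> Pow X \<Longrightarrow>
    \<exists>S. isInit X S \<and> card S = card A \<and> card (nb X S) \<le> card (nb X A)"
proof (induction "card X" arbitrary: X A rule: less_induct)
  case less
  note X = less.prems(1) and A = less.prems(2)
  have IH': "card (nb Y S) \<le> card (nb Y B)"
    if Y: "finite Y" "card Y < card X" and B: "B \<subseteq> Pow Y" and S: "isInit Y S" "card S = card B"
    for Y B S
  proof -
    obtain S' where S': "isInit Y S'" "card S' = card B" "card (nb Y S') \<le> card (nb Y B)"
      using less.hyps[OF Y(2) Y(1) B] by blast
    have "S = S'" using init_eq[OF Y(1) S(1) S'(1)] S(2) S'(2) by simp
    then show ?thesis using S' by simp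
  qed
  define Cands where "Cands = {A'. A' \<subseteq> Pow X \<and> card A' = card A \<and> card (nb X A') \<le> card (nb X A)}"
  define W where "W = (\<lambda>A'. sum (pos X) A')"
  have "A \<in> Cands" unfolding Cands_def using A by simp
  then obtain A0 where A0: "A0 \<in> Cands" and A0min: "\<forall>A'. A' \<in> Cands \<longrightarrow> W A0 \<le> W A'"
    using ex_has_least_nat[of "\<lambda>A'. A' \<in> Cands" A W] by blast
  have A0P: "A0 \<subseteq> Pow X" using A0 unfolding Cands_def by blast
  have fA0: "finite A0" using A0P X finite_subset[of A0 "Pow X"] by simp
  have comp: "compressed X A0"
    unfolding compressed_def
  proof (intro ballI)
    fix i assume iX: "i \<in> X"
    define Y where "Y = X - {i}"
    have fY: "finite Y" unfolding Y_def using X by simp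
    have cY: "card Y < card X" unfolding Y_def by (rule card_Diff1_less[OF X iX])
    define P where "P = low i A0"
    define Q where "Q = up i A0"
    have PY: "P \<subseteq> Pow Y" unfolding P_def Y_def using low_sub[OF A0P] .
    have QY: "Q \<subseteq> Pow Y" unfolding Q_def Y_def using up_sub[OF A0P] .
    have fP: "finite P" using PY fY finite_subset[of P "Pow Y"] by simp
    have fQ: "finite Q" using QY fY finite_subset[of Q "Pow Y"] by simp
    have "card P \<le> card (Pow Y)" using PY fY by (intro card_mono) auto
    then obtain P' where P': "isInit Y P'" "card P' = card P" using init_exists[OF fY] by blast
    have "card Q \<le> card (Pow Y)" using QY fY by (intro card_mono) auto
    then obtain Q' where Q': "isInit Y Q'" "card Q' = card Q" using init_exists[OF fY] by blast
    have P'Y: "P' \<subseteq> Pow Y" and Q'Y: "Q' \<subseteq> Pow Y" using P' Q' unfolding isInit_def by auto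
    have fP': "finite P'" using init_finite[OF fY P'(1)] .
    have fQ': "finite Q'" using init_finite[OF fY Q'(1)] .
    have noi: "\<And>Z. Z \<subseteq> Pow Y \<Longrightarrow> \<forall>x\<in>Z. i \<notin> x" unfolding Y_def by blast
    have A0g: "A0 = glue i P Q" unfolding P_def Q_def by (simp add: glue_low_up)
    define A1 where "A1 = glue i P' Q'"
    have A1P: "A1 \<subseteq> Pow X" unfolding A1_def glue_def using P'Y Q'Y iX unfolding Y_def by auto
    have cA1: "card A1 = card A0"
      unfolding A1_def using card_glue[OF fP' fQ' noi[OF P'Y] noi[OF Q'Y]]
        card_glue[OF fP fQ noi[OF PY] noi[OF QY]] A0g P'(2) Q'(2) by simp
    have nbP': "isInit Y (nb Y P')" using nb_init[OF fY P'(1)] .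
    have nbQ': "isInit Y (nb Y Q')" using nb_init[OF fY Q'(1)] .
    have fnb: "\<And>Z. finite (nb Y Z)" using finite_nb[OF fY] .
    have h1: "card (nb Y P' \<union> Q') \<le> card (nb Y P \<union> Q)"
    proof -
      have "card (nb Y P' \<union> Q') = max (card (nb Y P')) (card Q')"
        using init_union_card[OF fY nbP' Q'(1)] .
      also have "\<dots> \<le> max (card (nb Y P)) (card Q)"
        using IH'[OF fY cY[unfolded Y_def[symmetric]] PY P'(1) P'(2)] Q'(2) by simp
      also have "\<dots> \<le> card (nb Y P \<union> Q)"
        using fnb fQ by (simp add: card_mono)
      finally show ?thesis .
    qed
    have h2: "card (nb Y Q' \<union> P') \<le> card (nb Y Q \<union> P)"
    proof -
      have "card (nb Y Q' \<union> P') = max (card (nb Y Q')) (card P')"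
        using init_union_card[OF fY nbQ' P'(1)] .
      also have "\<dots> \<le> max (card (nb Y Q)) (card P)"
        using IH'[OF fY cY[unfolded Y_def[symmetric]] QY Q'(1) Q'(2)] P'(2) by simp
      also have "\<dots> \<le> card (nb Y Q \<union> P)"
        using fnb fP by (simp add: card_mono)
      finally show ?thesis .
    qed
    have U1: "nb Y P' \<union> Q' \<subseteq> Pow Y" "nb Y Q' \<union> P' \<subseteq> Pow Y"
      using nb_sub[of Y] P'Y Q'Y by auto
    have U0: "nb Y P \<union> Q \<subseteq> Pow Y" "nb Y Q \<union> P \<subseteq> Pow Y"
      using nb_sub[of Y] PY QY by auto
    have fin1: "finite (nb Y P' \<union> Q')" "finite (nb Y Q' \<union> P')"
      "finite (nb Y P \<union> Q)" "finite (nb Y Q \<union> P)" using fnb fP fQ fP' fQ' by auto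
    have "card (nb X A1) = card (nb Y P' \<union> Q') + card (nb Y Q' \<union> P')"
      unfolding A1_def nb_glue[OF iX P'Y[unfolded Y_def] Q'Y[unfolded Y_def], folded Y_def]
      using card_glue[OF fin1(1,2) noi[OF U1(1)] noi[OF U1(2)]] .
    also have "\<dots> \<le> card (nb Y P \<union> Q) + card (nb Y Q \<union> P)" using h1 h2 by simp
    also have "\<dots> = card (nb X A0)"
      unfolding A0g nb_glue[OF iX PY[unfolded Y_def] QY[unfolded Y_def], folded Y_def]
      using card_glue[OF fin1(3,4) noi[OF U0(1)] noi[OF U0(2)]] by simp
    finally have "card (nb X A1) \<le> card (nb X A0)" .
    then have "A1 \<in> Cands" using A0 A1P cA1 unfolding Cands_def by auto
    then have Wle: "W A0 \<le> W A1" using A0min by blast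
    have WA0: "W A0 = sum (pos X) P + sum (\<lambda>x. pos X (insert i x)) Q"
      unfolding W_def A0g using sum_glue[OF fP fQ noi[OF PY] noi[OF QY]] .
    have WA1: "W A1 = sum (pos X) P' + sum (\<lambda>x. pos X (insert i x)) Q'"
      unfolding W_def A1_def using sum_glue[OF fP' fQ' noi[OF P'Y] noi[OF Q'Y]] .
    have m1: "\<forall>u\<in>Pow Y. \<forall>v\<in>Pow Y. sl u v \<longrightarrow> pos X u < pos X v"
    proof (intro ballI impI)
      fix u v assume "u \<in> Pow Y" "v \<in> Pow Y" "sl u v"
      then show "pos X u < pos X v" using pos_mono[OF X, of v u] unfolding Y_def by auto
    qed
    have m2: "\<forall>u\<in>Pow Y. \<forall>v\<in>Pow Y. sl u v \<longrightarrow> pos X (insert i u) < pos X (insert i v)"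
    proof (intro ballI impI)
      fix u v assume u: "u \<in> Pow Y" and v: "v \<in> Pow Y" and uv: "sl u v"
      have fu: "finite u" "finite v" using u v fY finite_subset by auto
      have "sl (insert i u) (insert i v)" using sl_insert[OF fu] u v uv unfolding Y_def by auto
      moreover have "insert i u \<subseteq> X" "insert i v \<subseteq> X" using u v iX unfolding Y_def by auto
      ultimately show "pos X (insert i u) < pos X (insert i v)" using pos_mono[OF X] by blast
    qed
    have r1: "sum (pos X) P' \<le> sum (pos X) P \<and> (P \<noteq> P' \<longrightarrow> sum (pos X) P' < sum (pos X) P)"
      using rearr[OF fY m1 PY P'(1)] P'(2) by simp
    have r2: "sum (\<lambda>x. pos X (insert i x)) Q' \<le> sum (\<lambda>x. pos X (insert i x)) Q \<and>
        (Q \<noteq> Q' \<longrightarrow> sum (\<lambda>x. pos X (insert i x)) Q' < sum (\<lambda>x. pos X (insert i x)) Q)"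
      using rearr[OF fY m2 QY Q'(1)] Q'(2) by simp
    have "P = P'"
    proof (rule ccontr)
      assume "P \<noteq> P'"
      then have "sum (pos X) P' < sum (pos X) P" using r1 by blast
      then have "W A1 < W A0" using r2 WA0 WA1 by linarith
      then show False using Wle by simp
    qed
    moreover have "Q = Q'"
    proof (rule ccontr)
      assume "Q \<noteq> Q'"
      then have "sum (\<lambda>x. pos X (insert i x)) Q' < sum (\<lambda>x. pos X (insert i x)) Q" using r2 by blast
      then have "W A1 < W A0" using r1 WA0 WA1 by linarith
      then show False using Wle by simp
    qed
    ultimately show "isInit (X - {i}) (low i A0) \<and> isInit (X - {i}) (up i A0)"
      using P' Q' unfolding P_def Q_def Y_def by simp
  qed
  obtain S where S: "isInit X S" "card S = card A0" "card (nb X S) \<le> card (nb X A0)"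
    using final_step[OF X A0P comp] by blast
  then show ?case using A0 unfolding Cands_def by auto
qed

lemma harper:
  assumes X: "finite X" and A: "A \<subseteq> Pow X" and T: "isInit X T" and c: "card T \<le> card A"
  shows "card (nb X T) \<le> card (nb X A)"
proof -
  obtain S where S: "isInit X S" "card S = card A" "card (nb X S) \<le> card (nb X A)"
    using harper_gen[OF X A] by blast
  have "T \<subseteq> S" using init_nested[OF X T S(1)] c S(2) by simp
  then have "card (nb X T) \<le> card (nb X S)" by (rule card_mono[OF finite_nb[OF X] nb_mono])
  then show ?thesis using S(3) by simp
qed



definition symd :: "nat set \<Rightarrow> nat set \<Rightarrow> nat set" where
  "symd x y = (x - y) \<union> (y - x)"

lemma hdist_symd: "hdist x y = card (symd x y)"
  unfolding hdist_def symd_def by simp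

lemma symd_flip: "j \<in> symd x y \<Longrightarrow> symd (flip j x) y = symd x y - {j}"
  unfolding symd_def flip_def by auto

lemma symd_tri: "symd x y \<subseteq> symd x z \<union> symd z y"
  unfolding symd_def by auto

lemma symd_flip_self: "symd (flip j x) x = {j}"
  unfolding symd_def flip_def by auto

lemma nbhd0:
  assumes "A \<subseteq> cube n" shows "nbhd n 0 A = A"
proof
  show "nbhd n 0 A \<subseteq> A"
  proof
    fix x assume "x \<in> nbhd n 0 A"
    then obtain y where y: "y \<in> A" "hdist x y \<le> 0" "x \<in> cube n" unfolding nbhd_def by blast
    have "finite (symd x y)" using y assms unfolding cube_def symd_def
      by (meson PowD finite_Un finite_Diff finite_atLeastAtMost finite_subset subsetD)
    then have "symd x y = {}" using y(2) hdist_symd by simp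
    then have "x = y" unfolding symd_def by blast
    then show "x \<in> A" using y by simp
  qed
next
  show "A \<subseteq> nbhd n 0 A"
  proof
    fix x assume x: "x \<in> A"
    have "hdist x x = 0" unfolding hdist_def by simp
    then show "x \<in> nbhd n 0 A" using assms x unfolding nbhd_def by auto
  qed
qed

lemma nbhd_Suc:
  assumes A: "A \<subseteq> cube n"
  shows "nbhd n (Suc t) A = nb {1..n} (nbhd n t A)"
proof -
  have fin: "\<And>x y. x \<in> cube n \<Longrightarrow> y \<in> cube n \<Longrightarrow> finite (symd x y)"
    unfolding cube_def symd_def by (meson PowD finite_Un finite_Diff finite_atLeastAtMost finite_subset)
  show ?thesis
  proof
  show "nbhd n (Suc t) A \<subseteq> nb {1..n} (nbhd n t A)"
  proof
    fix x assume "x \<in> nbhd n (Suc t) A"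
    then obtain y where y: "y \<in> A" "hdist x y \<le> Suc t" and xc: "x \<in> cube n"
      unfolding nbhd_def by blast
    have yc: "y \<in> cube n" using y A by blast
    show "x \<in> nb {1..n} (nbhd n t A)"
    proof (cases "hdist x y \<le> t")
      case True
      then have "x \<in> nbhd n t A" unfolding nbhd_def using xc y by blast
      then show ?thesis unfolding nb_def using xc unfolding cube_def by blast
    next
      case False
      then have "card (symd x y) = Suc t" using y(2) hdist_symd by simp
      then have "symd x y \<noteq> {}" by auto
      then obtain j where j: "j \<in> symd x y" by blast
      have jX: "j \<in> {1..n}" using j xc yc unfolding symd_def cube_def by blast
      define z where "z = flip j x"
      have zc: "z \<in> cube n" unfolding z_def cube_def using flip_sub xc jX unfolding cube_def by blast
      have "card (symd z y) = t" unfolding z_def using symd_flip[OF j] \<open>card (symd x y) = Suc t\<close>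
        fin[OF xc yc] j by simp
      then have "z \<in> nbhd n t A" unfolding nbhd_def using zc y(1) hdist_symd by auto
      moreover have "x = flip j z" unfolding z_def by simp
      ultimately show ?thesis unfolding nb_def using xc jX unfolding cube_def by blast
    qed
  qed
next
  show "nb {1..n} (nbhd n t A) \<subseteq> nbhd n (Suc t) A"
  proof
    fix x assume x: "x \<in> nb {1..n} (nbhd n t A)"
    then have xc: "x \<in> cube n" unfolding nb_def cube_def by blast
    from x show "x \<in> nbhd n (Suc t) A"
    proof (cases rule: nb_cases)
      case 1
      then obtain y where "y \<in> A" "hdist x y \<le> t" unfolding nbhd_def by blast
      then have "hdist x y \<le> Suc t" by simp
      then show ?thesis unfolding nbhd_def using xc \<open>y \<in> A\<close> by blast
    next
      case (2 z j)
      then obtain y where y: "y \<in> A" "hdist z y \<le> t" and zc: "z \<in> cube n"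
        unfolding nbhd_def by blast
      have yc: "y \<in> cube n" using y A by blast
      have "symd x y \<subseteq> symd x z \<union> symd z y" by (rule symd_tri)
      then have "card (symd x y) \<le> card (symd x z \<union> symd z y)"
        using fin[OF xc zc] fin[OF zc yc] by (intro card_mono) auto
      also have "\<dots> \<le> card (symd x z) + card (symd z y)" by (rule card_Un_le)
      also have "symd x z = {j}" using 2 symd_flip_self by simp
      finally have "card (symd x y) \<le> Suc t" using y(2) hdist_symd by simp
      then show ?thesis unfolding nbhd_def using xc y(1) hdist_symd by auto
    qed
  qed
  qed
qed

lemma nbhd_sub: "nbhd n t A \<subseteq> cube n"
  unfolding nbhd_def by blast



definition T :: "nat \<Rightarrow> nat \<Rightarrow> nat set set" where
  "T n s = {x \<in> Pow {1..n}. card x \<le> s \<or> (card x = Suc s \<and> 1 \<in> x)}"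

lemma T_init: "isInit {1..n} (T n s)"
  unfolding isInit_def
proof (intro conjI ballI impI)
  show "T n s \<subseteq> Pow {1..n}" unfolding T_def by blast
next
  fix v u assume v: "v \<in> T n s" and u: "u \<in> Pow {1..n}" and uv: "sl u v"
  show "u \<in> T n s"
  proof (cases "card u < card v")
    case True
    then show ?thesis using v u unfolding T_def by auto
  next
    case False
    then have cu: "card u = card v" and "lexl u v" using uv unfolding sl_def by auto
    then obtain a where a: "a \<in> u" "a \<notin> v" "\<forall>b<a. b \<in> u \<longleftrightarrow> b \<in> v"
      unfolding lexl_def by blast
    show ?thesis
    proof (cases "card v \<le> s")
      case True
      then show ?thesis using cu u unfolding T_def by auto
    next
      case False
      then have v1: "card v = Suc s" "1 \<in> v" using v unfolding T_def by auto
      have "a \<ge> 1" using a u by auto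
      moreover have "a \<noteq> 1" using a v1 by blast
      ultimately have "1 < a" by simp
      then have "1 \<in> u" using a v1 by blast
      then show ?thesis using cu v1 u unfolding T_def by auto
    qed
  qed
qed

lemma T_nb: "nb {1..n} (T n s) = T n (Suc s)"
proof
  show "nb {1..n} (T n s) \<subseteq> T n (Suc s)"
  proof
    fix x assume x: "x \<in> nb {1..n} (T n s)"
    have xX: "x \<subseteq> {1..n}" using x nb_sub by blast
    have fx: "finite x" using xX finite_subset by blast
    from x show "x \<in> T n (Suc s)"
    proof (cases rule: nb_cases)
      case 1 then show ?thesis unfolding T_def by auto
    next
      case (2 y j)
      have fy: "finite y" using 2 unfolding T_def using finite_subset by blast
      show ?thesis
      proof (cases "j \<in> y")
        case True
        then have "x = y - {j}" using 2 unfolding flip_def by simp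
        then have "card x = card y - 1" using fy True by simp
        then show ?thesis using 2 xX unfolding T_def by auto
      next
        case False
        then have "x = insert j y" using 2 unfolding flip_def by simp
        then have "card x = Suc (card y)" "1 \<in> y \<longrightarrow> 1 \<in> x" using fy False by auto
        then show ?thesis using 2 xX unfolding T_def by auto
      qed
    qed
  qed
next
  show "T n (Suc s) \<subseteq> nb {1..n} (T n s)"
  proof
    fix x assume x: "x \<in> T n (Suc s)"
    have xX: "x \<subseteq> {1..n}" using x unfolding T_def by blast
    have fx: "finite x" using xX finite_subset by blast
    have TP: "T n s \<subseteq> Pow {1..n}" unfolding T_def by blast
    show "x \<in> nb {1..n} (T n s)"
    proof (cases "x \<in> T n s")
      case True
      then show ?thesis using sub_nb[OF TP] by blast
    next
      case False
      then have c: "(card x = Suc s \<and> 1 \<notin> x) \<or> (card x = Suc (Suc s) \<and> 1 \<in> x)"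
        using x unfolding T_def by auto
      have "\<exists>k\<in>x. k \<noteq> 1"
      proof (rule ccontr)
        assume "\<not> (\<exists>k\<in>x. k \<noteq> 1)"
        then have "x \<subseteq> {1}" by blast
        then have "x = {} \<or> x = {1}" by blast
        then show False using c by auto
      qed
      then obtain k where k: "k \<in> x" "k \<noteq> 1" by blast
      have "x - {k} \<in> T n s"
        using c k xX fx unfolding T_def by auto
      moreover have "x = flip k (x - {k})" using k unfolding flip_def by auto
      moreover have "k \<in> {1..n}" using k xX by blast
      ultimately show ?thesis using flip_in_nb[OF _ TP] by metis
    qed
  qed
qed

lemma B_sub: "Bset n s \<subseteq> cube n"
  unfolding Bset_def by blast

lemma B_mono: "Bset n s \<subseteq> Bset n (Suc s)"
  unfolding Bset_def by auto

lemma B_flip: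
  assumes y: "y \<in> Bset n s" and j: "j \<in> {1..n}"
  shows "flip j y \<in> Bset n (Suc s)"
proof -
  have yX: "y \<subseteq> {1..n}" using y unfolding Bset_def cube_def by blast
  have fy: "finite y" using yX finite_subset by blast
  have fX: "flip j y \<in> cube n" using flip_sub[OF yX j] unfolding cube_def by blast
  show ?thesis
  proof (cases "j \<in> y")
    case True
    then have e: "flip j y = y - {j}" unfolding flip_def by simp
    then have "card (flip j y) = card y - 1" using fy True by simp
    moreover have "card y \<le> s + 2" using y unfolding Bset_def by auto
    ultimately have "card (flip j y) \<le> Suc s" by simp
    then show ?thesis using fX unfolding Bset_def by blast
  next
    case False
    then have e: "flip j y = insert j y" unfolding flip_def by simp
    then have cf: "card (flip j y) = Suc (card y)" using fy False by simp
    show ?thesis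
    proof (cases "card y \<le> s")
      case True
      then show ?thesis using fX cf unfolding Bset_def by auto
    next
      case False
      then have "(card y = s + 1 \<or> card y = s + 2) \<and> {1, 2} \<subseteq> y" using y unfolding Bset_def by auto
      then have "(card (flip j y) = Suc s + 1 \<or> card (flip j y) = Suc s + 2) \<and> {1, 2} \<subseteq> flip j y"
        using cf e by auto
      then show ?thesis using fX unfolding Bset_def by blast
    qed
  qed
qed

lemma B_nb: "nb {1..n} (Bset n s) \<subseteq> Bset n (Suc s)"
proof
  fix x assume "x \<in> nb {1..n} (Bset n s)"
  then show "x \<in> Bset n (Suc s)"
  proof (cases rule: nb_cases)
    case 1 then show ?thesis using B_mono by blast
  next
    case (2 y j) then show ?thesis using B_flip by simp
  qed
qed

lemma B_compl_nb:
  "nb {1..n} (cube n - Bset n (Suc s)) \<subseteq> cube n - Bset n s"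
proof
  fix x assume x: "x \<in> nb {1..n} (cube n - Bset n (Suc s))"
  have xc: "x \<in> cube n" using x nb_sub unfolding cube_def by blast
  have "x \<notin> Bset n s"
  proof
    assume xB: "x \<in> Bset n s"
    from x show False
    proof (cases rule: nb_cases)
      case 1 then show ?thesis using xB B_mono by blast
    next
      case (2 z j)
      then have "z = flip j x" by simp
      then have "z \<in> Bset n (Suc s)" using B_flip[OF xB 2(2)] by simp
      then show False using 2 by blast
    qed
  qed
  then show "x \<in> cube n - Bset n s" using xc by blast
qed



lemma card_B_T:
  assumes n: "n \<ge> 2"
  shows "card (Bset n s) = card (T n s)"
proof -
  define \<phi> where "\<phi> = (\<lambda>x::nat set. if card x = Suc s \<and> 2 \<notin> x then insert 2 x else x)"
  have fin: "\<And>x. x \<subseteq> {1..n} \<Longrightarrow> finite x" using finite_subset by blast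
  have inj: "inj_on \<phi> (T n s)"
  proof (rule inj_onI)
    fix x y assume x: "x \<in> T n s" and y: "y \<in> T n s" and e: "\<phi> x = \<phi> y"
    have fx: "finite x" and fy: "finite y" using x y fin unfolding T_def by auto
    have cx: "card x \<le> Suc s" and cy: "card y \<le> Suc s" using x y unfolding T_def by auto
    show "x = y"
    proof (cases "card x = Suc s \<and> 2 \<notin> x")
      case True
      then have ex: "\<phi> x = insert 2 x" unfolding \<phi>_def by simp
      have cpx: "card (\<phi> x) = Suc (Suc s)" using ex True fx by simp
      show ?thesis
      proof (cases "card y = Suc s \<and> 2 \<notin> y")
        case True
        then have "\<phi> y = insert 2 y" unfolding \<phi>_def by simp
        then have "insert 2 x = insert 2 y" using ex e by simp
        then show ?thesis using True \<open>card x = Suc s \<and> 2 \<notin> x\<close>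
          by (metis insert_ident)
      next
        case False
        then have "\<phi> y = y" unfolding \<phi>_def by (rule if_not_P)
        then show ?thesis using cpx e cy by simp
      qed
    next
      case False
      then have ex: "\<phi> x = x" unfolding \<phi>_def by (rule if_not_P)
      show ?thesis
      proof (cases "card y = Suc s \<and> 2 \<notin> y")
        case True
        then have "\<phi> y = insert 2 y" unfolding \<phi>_def by simp
        then have "card (\<phi> y) = Suc (Suc s)" using True fy by simp
        then show ?thesis using ex e cx by simp
      next
        case False
        then have "\<phi> y = y" unfolding \<phi>_def by (rule if_not_P)
        then show ?thesis using ex e by simp
      qed
    qed
  qed
  have img: "\<phi> ` T n s = Bset n s"
  proof
    show "\<phi> ` T n s \<subseteq> Bset n s"
    proof
      fix z assume "z \<in> \<phi> ` T n s"
      then obtain x where x: "x \<in> T n s" "z = \<phi> x" by blast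
      have xX: "x \<subseteq> {1..n}" and fx: "finite x" using x fin unfolding T_def by auto
      show "z \<in> Bset n s"
      proof (cases "card x = Suc s \<and> 2 \<notin> x")
        case True
        then have "z = insert 2 x" using x unfolding \<phi>_def by simp
        moreover have "1 \<in> x" using x True unfolding T_def by auto
        moreover have "card (insert 2 x) = s + 2" using True fx by simp
        moreover have "insert 2 x \<subseteq> {1..n}" using xX n by auto
        ultimately show ?thesis unfolding Bset_def cube_def by auto
      next
        case False
        then have "\<phi> x = x" unfolding \<phi>_def by (rule if_not_P)
        then have zx: "z = x" using x by simp
        show ?thesis
        proof (cases "card x \<le> s")
          case True
          then show ?thesis using zx xX unfolding Bset_def cube_def by auto
        next
          case False
          then have "card x = Suc s" "1 \<in> x" using x unfolding T_def by auto
          moreover have "2 \<in> x" using \<open>\<not> (card x = Suc s \<and> 2 \<notin> x)\<close> \<open>card x = Suc s\<close> by blast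
          ultimately show ?thesis using zx xX unfolding Bset_def cube_def by auto
        qed
      qed
    qed
  next
    show "Bset n s \<subseteq> \<phi> ` T n s"
    proof
      fix y assume y: "y \<in> Bset n s"
      have yX: "y \<subseteq> {1..n}" and fy: "finite y" using y fin unfolding Bset_def cube_def by auto
      show "y \<in> \<phi> ` T n s"
      proof (cases "card y \<le> s")
        case True
        then have "y \<in> T n s" "\<phi> y = y" using yX unfolding T_def \<phi>_def by auto
        then show ?thesis by (metis imageI)
      next
        case False
        then have c: "card y = s + 1 \<or> card y = s + 2" and s12: "{1, 2} \<subseteq> y"
          using y unfolding Bset_def by auto
        show ?thesis
        proof (cases "card y = s + 1")
          case True
          then have "y \<in> T n s" "\<phi> y = y" using yX s12 unfolding T_def \<phi>_def by auto
          then show ?thesis by (metis imageI)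
        next
          case False
          then have cy: "card y = s + 2" using c by simp
          define x where "x = y - {2}"
          have cx: "card x = Suc s" unfolding x_def using cy s12 fy by simp
          have "x \<in> T n s" unfolding T_def x_def using yX s12 cx[unfolded x_def] by auto
          moreover have "\<phi> x = y" unfolding \<phi>_def x_def using cx[unfolded x_def] s12 by (auto simp: insert_absorb)
          ultimately show ?thesis by (metis imageI)
        qed
      qed
    qed
  qed
  show ?thesis using card_image[OF inj] img by simp
qed

lemma card_T:
  assumes n: "n \<ge> 1"
  shows "card (T n r) = (\<Sum>j=0..r. n choose j) + ((n - 1) choose r)"
proof -
  define L where "L = (\<lambda>r. {x \<in> Pow {1..n}. card x \<le> r})"
  have lev: "card {x \<in> Pow {1..n}. card x = k} = n choose k" for k
  proof -
    have "{x \<in> Pow {1..n}. card x = k} = {B. B \<subseteq> {1..n} \<and> card B = k}" by auto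
    then show ?thesis using n_subsets[of "{1..n}" k] by simp
  qed
  have cL: "card (L r) = (\<Sum>j=0..r. n choose j)" for r
  proof (induction r)
    case 0
    have "L 0 = {x \<in> Pow {1..n}. card x = 0}" unfolding L_def by auto
    then show ?case using lev[of 0] by simp
  next
    case (Suc r)
    have "L (Suc r) = L r \<union> {x \<in> Pow {1..n}. card x = Suc r}" unfolding L_def by auto
    moreover have "L r \<inter> {x \<in> Pow {1..n}. card x = Suc r} = {}" unfolding L_def by auto
    moreover have "finite (L r)" unfolding L_def by simp
    ultimately have "card (L (Suc r)) = card (L r) + (n choose Suc r)"
      using lev[of "Suc r"] by (simp add: card_Un_disjoint)
    then show ?case using Suc by simp
  qed
  define M where "M = {x \<in> Pow {1..n}. card x = Suc r \<and> 1 \<in> x}"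
  have Meq: "M = insert 1 ` {B. B \<subseteq> {2..n} \<and> card B = r}"
  proof
    show "M \<subseteq> insert 1 ` {B. B \<subseteq> {2..n} \<and> card B = r}"
    proof
      fix x assume x: "x \<in> M"
      have fx: "finite x" using x unfolding M_def using finite_subset by blast
      have "x = insert 1 (x - {1})" using x unfolding M_def by auto
      moreover have "x - {1} \<subseteq> {2..n}" using x unfolding M_def by auto
      moreover have "card (x - {1}) = r" using x fx unfolding M_def by auto
      ultimately show "x \<in> insert 1 ` {B. B \<subseteq> {2..n} \<and> card B = r}" by blast
    qed
  next
    show "insert 1 ` {B. B \<subseteq> {2..n} \<and> card B = r} \<subseteq> M"
    proof
      fix x assume "x \<in> insert 1 ` {B. B \<subseteq> {2..n} \<and> card B = r}"
      then obtain B where B: "B \<subseteq> {2..n}" "card B = r" "x = insert 1 B" by blast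
      have fB: "finite B" using B finite_subset by blast
      have "1 \<notin> B" using B by auto
      then show "x \<in> M" unfolding M_def using B fB n by auto
    qed
  qed
  have "inj_on (insert 1) {B. B \<subseteq> {2..n} \<and> card B = r}"
  proof (rule inj_onI)
    fix x y assume "x \<in> {B. B \<subseteq> {2..n} \<and> card B = r}" "y \<in> {B. B \<subseteq> {2..n} \<and> card B = r}"
      "insert 1 x = insert 1 y"
    moreover have "(1::nat) \<notin> x" "(1::nat) \<notin> y" using calculation by auto
    ultimately show "x = y" by (metis insert_ident)
  qed
  then have cM: "card M = (n - 1) choose r"
    using Meq card_image[of "insert 1" "{B. B \<subseteq> {2..n} \<and> card B = r}"] n_subsets[of "{2..n}" r] by simp
  have "T n r = L r \<union> M" unfolding T_def L_def M_def by auto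
  moreover have "L r \<inter> M = {}" unfolding L_def M_def by auto
  moreover have "finite (L r)" "finite M" unfolding L_def M_def by auto
  ultimately have "card (T n r) = card (L r) + card M" by (simp add: card_Un_disjoint)
  then show ?thesis using cL cM by simp
qed



lemma cube_fin: "finite (cube n)" unfolding cube_def by simp
lemma card_cube: "card (cube n) = 2 ^ n" unfolding cube_def by (simp add: card_Pow)

lemma lower_a:
  assumes B: "B \<subseteq> cube n" and c: "card (T n r) \<le> card B"
  shows "card (T n (r + t)) \<le> card (nbhd n t B)"
proof (induction t)
  case 0
  then show ?case using c nbhd0[OF B] by simp
next
  case (Suc t)
  have sub: "nbhd n t B \<subseteq> Pow {1..n}" using nbhd_sub unfolding cube_def .
  have "card (nb {1..n} (T n (r + t))) \<le> card (nb {1..n} (nbhd n t B))"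
    using harper[OF _ sub T_init Suc.IH] by simp
  then show ?case using T_nb nbhd_Suc[OF B] by simp
qed

lemma upper_a: "nbhd n t (Bset n r) \<subseteq> Bset n (r + t)"
proof (induction t)
  case 0
  then show ?case using nbhd0[OF B_sub] by simp
next
  case (Suc t)
  have "nbhd n (Suc t) (Bset n r) = nb {1..n} (nbhd n t (Bset n r))" using nbhd_Suc[OF B_sub] .
  also have "\<dots> \<subseteq> nb {1..n} (Bset n (r + t))" using nb_mono[OF Suc.IH] .
  also have "\<dots> \<subseteq> Bset n (Suc (r + t))" by (rule B_nb)
  finally show ?case by simp
qed

definition UU :: "nat \<Rightarrow> nat \<Rightarrow> nat \<Rightarrow> nat set set" where
  "UU n r t = (if t \<le> r then T n (r - t) else {})"

definition BB :: "nat \<Rightarrow> nat \<Rightarrow> nat \<Rightarrow> nat set set" where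
  "BB n r t = (if t \<le> r then Bset n (r - t) else {})"

lemma upper_b: "nbhd n t (cube n - Bset n r) \<subseteq> cube n - BB n r t"
proof (induction t)
  case 0
  have "cube n - Bset n r \<subseteq> cube n" by blast
  then show ?case using nbhd0 unfolding BB_def by simp
next
  case (Suc t)
  have "nbhd n (Suc t) (cube n - Bset n r) = nb {1..n} (nbhd n t (cube n - Bset n r))"
    using nbhd_Suc[of "cube n - Bset n r"] by blast
  also have "\<dots> \<subseteq> nb {1..n} (cube n - BB n r t)" using nb_mono[OF Suc.IH] .
  also have "\<dots> \<subseteq> cube n - BB n r (Suc t)"
  proof (cases "Suc t \<le> r")
    case True
    then have "BB n r t = Bset n (Suc (r - Suc t))" "BB n r (Suc t) = Bset n (r - Suc t)"
      unfolding BB_def by (auto simp: Suc_diff_Suc)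
    then show ?thesis using B_compl_nb by simp
  next
    case False
    then have "BB n r (Suc t) = {}" unfolding BB_def by simp
    then show ?thesis using nb_sub unfolding cube_def by blast
  qed
  finally show ?case .
qed

lemma card_BB: "n \<ge> 2 \<Longrightarrow> card (BB n r t) = card (UU n r t)"
  unfolding BB_def UU_def using card_B_T by simp

lemma compl_step:
  assumes n2: "n \<ge> 2" and rn: "r \<le> n - 2" and A: "A \<subseteq> cube n"
    and h: "2 ^ n \<le> card A + card (UU n r t)"
  shows "2 ^ n \<le> card (nb {1..n} A) + card (UU n r (Suc t))"
proof -
  let ?X = "{1..n::nat}"
  have X: "finite ?X" by simp
  have AP: "A \<subseteq> Pow ?X" using A unfolding cube_def .
  define C where "C = cube n - nb ?X A"
  have CP: "C \<subseteq> Pow ?X" unfolding C_def cube_def by blast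
  have fC: "finite C" using CP finite_subset[of C "Pow ?X"] by simp
  have nbA: "nb ?X A \<subseteq> cube n" using nb_sub unfolding cube_def .
  have cC: "card (nb ?X A) + card C = 2 ^ n"
    unfolding C_def using card_Diff_subset[OF finite_subset[OF nbA cube_fin] nbA] card_mono[OF cube_fin nbA]
      card_cube by simp
  have disj: "nb ?X C \<inter> A = {}"
  proof (rule ccontr)
    assume "nb ?X C \<inter> A \<noteq> {}"
    then obtain w where w: "w \<in> nb ?X C" "w \<in> A" by blast
    from w(1) show False
    proof (cases rule: nb_cases)
      case 1
      then show False using w(2) sub_nb[OF AP] unfolding C_def by blast
    next
      case (2 c j)
      then have "c = flip j w" by simp
      then have "c \<in> nb ?X A" using flip_in_nb[OF w(2) AP 2(2)] by simp
      then show False using 2(1) unfolding C_def by blast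
    qed
  qed
  have "card (nb ?X C) + card A = card (nb ?X C \<union> A)"
    using disj finite_nb[OF X] finite_subset[OF A cube_fin] by (simp add: card_Un_disjoint)
  also have "\<dots> \<le> card (cube n)"
    using nb_sub[of ?X C] A unfolding cube_def by (intro card_mono) auto
  finally have "card (nb ?X C) + card A \<le> 2 ^ n" using card_cube by simp
  then have nbC: "card (nb ?X C) \<le> card (UU n r t)" using h by simp
  have "card C \<le> card (UU n r (Suc t))"
  proof (rule ccontr)
    assume "\<not> card C \<le> card (UU n r (Suc t))"
    then have big: "card (UU n r (Suc t)) + 1 \<le> card C" by simp
    show False
    proof (cases "Suc t \<le> r")
      case True
      define s where "s = r - Suc t"
      have U1: "UU n r (Suc t) = T n s" unfolding UU_def s_def using True by simp
      have U0: "UU n r t = T n (Suc s)" unfolding UU_def s_def using True by (simp add: Suc_diff_Suc)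
      have sn: "Suc s \<le> n - 2" unfolding s_def using True rn by simp
      have "card (T n s) + 1 \<le> card (Pow ?X)"
        using big U1 card_mono[OF _ CP] by simp
      then obtain S where S: "isInit ?X S" "card S = card (T n s) + 1"
        using init_exists[OF X] by blast
      have hS: "card (nb ?X S) \<le> card (nb ?X C)" using harper[OF X CP S(1)] S(2) big U1 by simp
      have TS: "T n s \<subseteq> S" using init_nested[OF X T_init S(1)] S(2) by simp
      have fS: "finite S" using init_finite[OF X S(1)] .
      have "T n s \<noteq> S" using S(2) by auto
      then obtain w where w: "w \<in> S" "w \<notin> T n s" using TS by blast
      have SP: "S \<subseteq> Pow ?X" using S(1) unfolding isInit_def by blast
      have wX: "w \<subseteq> ?X" using w SP by blast
      have fw: "finite w" using wX finite_subset by blast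
      have ex: "\<exists>e\<in>nb ?X S. e \<notin> T n (Suc s)"
      proof (cases "w \<in> T n (Suc s)")
        case False
        then show ?thesis using w sub_nb[OF SP] by blast
      next
        case True
        then have wc: "(card w = Suc s \<and> 1 \<notin> w) \<or> (card w = Suc (Suc s) \<and> 1 \<in> w)"
          using w unfolding T_def by auto
        have "card (w - {1}) = Suc s" using wc fw by auto
        moreover have "card (?X - {1}) = n - 1" using n2 by (simp add: card_Diff_singleton)
        ultimately have "card (w - {1}) < card (?X - {1})" using sn n2 by simp
        then have "\<not> (?X - {1} \<subseteq> w - {1})" using card_mono[of "w - {1}" "?X - {1}"] fw by auto
        then obtain j where j: "j \<in> ?X" "j \<noteq> 1" "j \<notin> w" by blast
        have e: "flip j w = insert j w" using j unfolding flip_def by simp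
        have "flip j w \<in> nb ?X S" using flip_in_nb[OF w(1) SP j(1)] .
        moreover have "insert j w \<notin> T n (Suc s)" using wc j fw unfolding T_def by auto
        ultimately show ?thesis using e by auto
      qed
      then obtain e where e: "e \<in> nb ?X S" "e \<notin> T n (Suc s)" by blast
      have "T n (Suc s) \<subseteq> nb ?X S" using nb_mono[OF TS] T_nb by blast
      then have "insert e (T n (Suc s)) \<subseteq> nb ?X S" using e by blast
      then have "card (insert e (T n (Suc s))) \<le> card (nb ?X S)"
        using finite_nb[OF X] by (intro card_mono) auto
      moreover have "card (insert e (T n (Suc s))) = Suc (card (T n (Suc s)))"
        using e(2) by (simp add: T_def)
      ultimately show False using hS nbC U0 by simp
    next
      case False
      show False
      proof (cases "t = r")
        case True
        have U0: "UU n r t = T n 0" unfolding UU_def using True by simp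
        have "card (T n 0) = 2" using card_T[of n 0] n2 by simp
        have "C \<noteq> {}" using big by auto
        then obtain c where c: "c \<in> C" by blast
        have o: "1 \<in> ?X" "2 \<in> ?X" using n2 by auto
        have "{c, flip 1 c, flip 2 c} \<subseteq> nb ?X C"
          using sub_nb[OF CP] c flip_in_nb[OF c CP o(1)] flip_in_nb[OF c CP o(2)] by blast
        moreover have "card {c, flip 1 c, flip 2 c} = 3"
        proof -
          have m1: "1 \<in> flip 1 c \<longleftrightarrow> 1 \<notin> c" "2 \<in> flip 2 c \<longleftrightarrow> 2 \<notin> c"
            "1 \<in> flip 2 c \<longleftrightarrow> 1 \<in> c" unfolding flip_def by auto
          have d: "flip 1 c \<noteq> c" "flip 2 c \<noteq> c" "flip 1 c \<noteq> flip 2 c"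
            using m1 by metis+
          then show ?thesis by simp
        qed
        ultimately have "3 \<le> card (nb ?X C)" using card_mono[OF finite_nb[OF X]] by metis
        then show False using nbC U0 \<open>card (T n 0) = 2\<close> by simp
      next
        case False
        then have "UU n r t = {}" using \<open>\<not> Suc t \<le> r\<close> unfolding UU_def by simp
        then have "card (cube n) \<le> card A" using h card_cube by simp
        then have "A = cube n" using card_seteq[OF cube_fin A] by simp
        then have "nb ?X A = cube n" using nbA sub_nb[OF AP] by blast
        then have "C = {}" unfolding C_def by simp
        then show False using big by simp
      qed
    qed
  qed
  then show ?thesis using cC by simp
qed



lemma lower_b:
  assumes n2: "n \<ge> 2" and rn: "r \<le> n - 2" and B: "B \<subseteq> cube n"
    and c: "2 ^ n \<le> card B + card (T n r)"
  shows "2 ^ n \<le> card (nbhd n t B) + card (UU n r t)"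
proof (induction t)
  case 0
  then show ?case using c nbhd0[OF B] unfolding UU_def by simp
next
  case (Suc t)
  have "2 ^ n \<le> card (nb {1..n} (nbhd n t B)) + card (UU n r (Suc t))"
    using compl_step[OF n2 rn nbhd_sub Suc.IH] .
  then show ?case using nbhd_Suc[OF B] by simp
qed

theorem mainTheorem2:
  fixes n r :: nat
  assumes "n \<ge> 2" and "r \<le> n - 1"
  shows "card (Bset n r) = (\<Sum>j=0..r. n choose j) + ((n - 1) choose r)
         \<and> extremal n (Bset n r)"
proof
  have n2: "n \<ge> 2" using assms(1) .
  have cBT: "\<And>s. card (Bset n s) = card (T n s)" using card_B_T[OF n2] .
  show "card (Bset n r) = (\<Sum>j=0..r. n choose j) + ((n - 1) choose r)"
    using cBT card_T[of n r] n2 by simp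
  show "extremal n (Bset n r)"
    unfolding extremal_def nbhd_minimal_def
  proof (intro allI impI conjI)
    fix t :: nat and B assume "0 < t" and B: "B \<subseteq> cube n" and cB: "card B = card (Bset n r)"
    have "card (nbhd n t (Bset n r)) \<le> card (Bset n (r + t))"
      using upper_a card_mono[OF finite_subset[OF B_sub cube_fin]] by metis
    also have "\<dots> = card (T n (r + t))" using cBT by simp
    also have "\<dots> \<le> card (nbhd n t B)" using lower_a[OF B] cB cBT by simp
    finally show "card (nbhd n t (Bset n r)) \<le> card (nbhd n t B)" .
  next
    fix t :: nat and B assume "0 < t" and B: "B \<subseteq> cube n" and cB: "card B = card (cube n - Bset n r)"
    show "card (nbhd n t (cube n - Bset n r)) \<le> card (nbhd n t B)"
    proof (cases "r = n - 1")
      case True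
      have "cube n \<subseteq> Bset n r"
      proof
        fix x assume x: "x \<in> cube n"
        then have xX: "x \<subseteq> {1..n}" unfolding cube_def by blast
        then have cx: "card x \<le> n" using card_mono[of "{1..n}" x] by simp
        show "x \<in> Bset n r"
        proof (cases "card x \<le> r")
          case True then show ?thesis using x unfolding Bset_def by blast
        next
          case False
          then have "card x = n" using cx True by simp
          then have "x = {1..n}" using xX card_subset_eq[of "{1..n}" x] by simp
          then have "{1, 2} \<subseteq> x" using n2 by auto
          then show ?thesis using x \<open>card x = n\<close> True n2 unfolding Bset_def by auto
        qed
      qed
      then have "cube n - Bset n r = {}" by blast
      then have "nbhd n t (cube n - Bset n r) = {}" unfolding nbhd_def by (simp only: bex_empty) simp
      then show ?thesis by simp
    next
      case False
      then have rn: "r \<le> n - 2" using assms(2) by simp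
      have cc: "card (cube n - Bset n r) = 2 ^ n - card (T n r)"
        using card_Diff_subset[OF finite_subset[OF B_sub cube_fin] B_sub] card_cube cBT by simp
      have "card (T n r) \<le> 2 ^ n" using cBT card_mono[OF cube_fin B_sub] card_cube by metis
      then have c: "2 ^ n \<le> card B + card (T n r)" using cB cc by simp
      have low: "2 ^ n \<le> card (nbhd n t B) + card (UU n r t)" using lower_b[OF n2 rn B c] .
      have "card (nbhd n t (cube n - Bset n r)) \<le> card (cube n - BB n r t)"
        using upper_b card_mono[OF finite_Diff[OF cube_fin]] by metis
      also have "\<dots> = 2 ^ n - card (BB n r t)"
      proof -
        have "BB n r t \<subseteq> cube n" unfolding BB_def using B_sub by simp
        then show ?thesis using card_Diff_subset[OF finite_subset[OF _ cube_fin]] card_cube by metis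
      qed
      also have "\<dots> = 2 ^ n - card (UU n r t)" using card_BB[OF n2] by simp
      also have "\<dots> \<le> card (nbhd n t B)" using low by simp
      finally show ?thesis .
    qed
  qed
qed

end
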